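(* For all $x\ge y\ge 1$ and $n>x+y$, the maximum possible number of edges in any $(x,y)$ task-dependency graph of order $n$ produced by the $(x,y)$ edge-addition process is $\binom{n}{2}+1-\binom{x}{2}-\binom{y+1}{2}$.
   Context: A task-dependency graph is a finite directed acyclic graph (no loops, no multiple edges). A vertex is initial if it has in-degree $0$ and terminal if it has out-degree $0$ (an isolated vertex is both). An $(x,y)$ task-dependency graph has exactly $x$ initial and exactly $y$ terminal vertices. The $(x,y)$ edge-addition process on $n$ vertices: start with the empty graph on $\{1,\dots,n\}$ and repeatedly add, uniformly at random, an edge $(a,b)$ with $a<b$ not yet present; if an addition would cause fewer than $x$ initial vertices or fewer than $y$ terminal vertices, it is cancelled. The process halts if the graph after some edge addition is an $(x,y)$ task-dependency graph, or if no more edges can be added; the produced graph is the final graph (over all possible runs). *)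

theory Defs
  imports Main
begin

text \<open>Graphs on vertex set {1..n}; an edge (a,b) always has a < b, so every such
  graph is a DAG without loops or multiple edges.\<close>

definition valid_edge :: "nat \<Rightarrow> nat \<times> nat \<Rightarrow> bool" where
  "valid_edge n e \<longleftrightarrow> 1 \<le> fst e \<and> fst e < snd e \<and> snd e \<le> n"

definition initial_vs :: "nat \<Rightarrow> (nat \<times> nat) set \<Rightarrow> nat set" where
  "initial_vs n E = {v \<in> {1..n}. \<forall>a. (a, v) \<notin> E}"

definition terminal_vs :: "nat \<Rightarrow> (nat \<times> nat) set \<Rightarrow> nat set" where
  "terminal_vs n E = {v \<in> {1..n}. \<forall>b. (v, b) \<notin> E}"

definition is_tdg :: "nat \<Rightarrow> nat \<Rightarrow> nat \<Rightarrow> (nat \<times> nat) set \<Rightarrow> bool" where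
  "is_tdg n x y E \<longleftrightarrow> (\<forall>e\<in>E. valid_edge n e)
     \<and> card (initial_vs n E) = x \<and> card (terminal_vs n E) = y"

definition admissible :: "nat \<Rightarrow> nat \<Rightarrow> nat \<Rightarrow> (nat \<times> nat) set \<Rightarrow> nat \<times> nat \<Rightarrow> bool" where
  "admissible n x y E e \<longleftrightarrow> valid_edge n e \<and> e \<notin> E
     \<and> x \<le> card (initial_vs n (insert e E)) \<and> y \<le> card (terminal_vs n (insert e E))"

text \<open>Graphs reachable by some run of the (x,y) edge-addition process (cancelled additions
  leave the graph unchanged; the process stops once an (x,y) task-dependency graph is reached).\<close>
inductive reachable :: "nat \<Rightarrow> nat \<Rightarrow> nat \<Rightarrow> (nat \<times> nat) set \<Rightarrow> bool"
  for n x y where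
  start: "reachable n x y {}"
| step: "reachable n x y E \<Longrightarrow> \<not> (E \<noteq> {} \<and> is_tdg n x y E) \<Longrightarrow> admissible n x y E e
         \<Longrightarrow> reachable n x y (insert e E)"

definition final_graph :: "nat \<Rightarrow> nat \<Rightarrow> nat \<Rightarrow> (nat \<times> nat) set \<Rightarrow> bool" where
  "final_graph n x y E \<longleftrightarrow> reachable n x y E \<and>
     ((E \<noteq> {} \<and> is_tdg n x y E) \<or> (\<forall>e. \<not> admissible n x y E e))"

end

theory Submission
  imports Defs
begin
lemma c2_pred: "(k::nat) choose 2 = ((k - 1) choose 2) + (k - 1)"
  by (cases k) (simp_all add: numeral_2_eq_2)

definition S :: "nat \<Rightarrow> nat set \<Rightarrow> nat set \<Rightarrow> (nat \<times> nat) set" where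
  "S n I T = {(u,v). 1 \<le> u \<and> u < v \<and> v \<le> n \<and> u \<notin> T \<and> v \<notin> I}"

lemma S_finite: "finite (S n I T)"
  by (rule finite_subset[of _ "{1..n} \<times> {1..n}"]) (auto simp: S_def)

lemma cnt_Suc: "card (I \<inter> {1..Suc m}) = card (I \<inter> {1..m}) + (if Suc m \<in> I then 1 else 0)"
proof -
  have "I \<inter> {1..Suc m} = (if Suc m \<in> I then insert (Suc m) (I \<inter> {1..m}) else I \<inter> {1..m})"
    by (auto simp: le_Suc_eq)
  then show ?thesis by auto
qed

lemma cnt_le: "card (I \<inter> {1..m}) \<le> m"
  using card_mono[of "{1..m}" "I \<inter> {1..m}"] by auto

lemma S_bound:
  "\<And>a b. a \<le> card (I \<inter> {1..n}) \<Longrightarrow> b \<le> card (T \<inter> {1..n}) \<Longrightarrow> a + b \<le> n + 1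
   \<Longrightarrow> card (S n I T) + (a choose 2) + (b choose 2) \<le> n choose 2"
proof (induction n)
  case 0
  have "S 0 I T = {}" by (auto simp: S_def)
  then show ?case using 0 by simp
next
  case (Suc m a b)
  define N where "N = {(u,v). v = Suc m \<and> 1 \<le> u \<and> u \<le> m \<and> u \<notin> T \<and> Suc m \<notin> I}"
  have split: "S (Suc m) I T = S m I T \<union> N"
    by (auto simp: S_def N_def le_Suc_eq)
  have disj: "S m I T \<inter> N = {}" by (auto simp: S_def N_def)
  have finN: "finite N"
    by (rule finite_subset[of _ "{1..m} \<times> {Suc m}"]) (auto simp: N_def)
  have cardS: "card (S (Suc m) I T) = card (S m I T) + card N"
    using split disj finN S_finite card_Un_disjoint by metis
  have cardN: "card N = (if Suc m \<in> I then 0 else m - card (T \<inter> {1..m}))"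
  proof (cases "Suc m \<in> I")
    case True
    then have "N = {}" by (auto simp: N_def)
    then show ?thesis using True by simp
  next
    case False
    then have "N = (\<lambda>u. (u, Suc m)) ` ({1..m} - T)" by (auto simp: N_def)
    then have "card N = card ({1..m} - T)" by (simp add: card_image inj_on_def)
    also have "\<dots> = m - card ({1..m} \<inter> T)" by (simp add: card_Diff_subset_Int)
    finally show ?thesis using False by (simp add: Int_commute)
  qed
  define a' where "a' = (if Suc m \<in> I then a - 1 else a)"
  have a'le: "a' \<le> card (I \<inter> {1..m})" using Suc.prems(1) cnt_Suc[of I m] by (auto simp: a'_def)
  have b'le: "b - 1 \<le> card (T \<inter> {1..m})" using Suc.prems(2) cnt_Suc[of T m] by (auto split: if_splits)
  have ab: "a' + (b - 1) \<le> m + 1" using Suc.prems(3) a'le cnt_le[of I m] by (auto simp: a'_def)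
  have IH: "card (S m I T) + (a' choose 2) + ((b - 1) choose 2) \<le> m choose 2"
    using Suc.IH[OF a'le b'le ab] .
  have cm: "Suc m choose 2 = (m choose 2) + m" using c2_pred[of "Suc m"] by simp
  have ca: "a choose 2 = ((a - 1) choose 2) + (a - 1)" by (rule c2_pred)
  have cb: "b choose 2 = ((b - 1) choose 2) + (b - 1)" by (rule c2_pred)
  have aI: "a \<le> m + 1" using Suc.prems(1) cnt_le[of I "Suc m"] by simp
  have bT: "b \<le> m + 1" using Suc.prems(2) cnt_le[of T "Suc m"] by simp
  have tm: "card (T \<inter> {1..m}) \<le> m" by (rule cnt_le)
  show ?case
  proof (cases "Suc m \<in> I")
    case True
    then show ?thesis using IH cardS cardN cm ca cb Suc.prems(3) aI bT by (simp add: a'_def; arith)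
  next
    case False
    then show ?thesis using IH cardS cardN cm cb b'le tm by (simp add: a'_def)
  qed
qed

lemma reach_valid: "reachable n x y E \<Longrightarrow> \<forall>e\<in>E. valid_edge n e"
  by (induction rule: reachable.induct) (auto simp: admissible_def)

lemma valid_finite: "\<forall>e\<in>E. valid_edge n e \<Longrightarrow> finite E"
  by (rule finite_subset[of _ "{1..n} \<times> {1..n}"]) (auto simp: valid_edge_def mem_Times_iff)

lemma init_fin: "finite (initial_vs n E)"
  by (rule finite_subset[of _ "{1..n}"]) (auto simp: initial_vs_def)
lemma term_fin: "finite (terminal_vs n E)"
  by (rule finite_subset[of _ "{1..n}"]) (auto simp: terminal_vs_def)

lemma init_anti: "G \<subseteq> H \<Longrightarrow> initial_vs n H \<subseteq> initial_vs n G"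
  by (auto simp: initial_vs_def)
lemma term_anti: "G \<subseteq> H \<Longrightarrow> terminal_vs n H \<subseteq> terminal_vs n G"
  by (auto simp: terminal_vs_def)

lemma card_init_anti: "G \<subseteq> H \<Longrightarrow> card (initial_vs n H) \<le> card (initial_vs n G)"
  by (rule card_mono[OF init_fin init_anti])
lemma card_term_anti: "G \<subseteq> H \<Longrightarrow> card (terminal_vs n H) \<le> card (terminal_vs n G)"
  by (rule card_mono[OF term_fin term_anti])

lemma E_sub_S: "\<forall>e\<in>G. valid_edge n e \<Longrightarrow> G \<subseteq> S n (initial_vs n G) (terminal_vs n G)"
  by (auto simp: S_def valid_edge_def initial_vs_def terminal_vs_def)

lemma card_bound:
  assumes "\<forall>e\<in>G. valid_edge n e" "a \<le> card (initial_vs n G)" "b \<le> card (terminal_vs n G)" "a + b \<le> n + 1"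
  shows "card G + (a choose 2) + (b choose 2) \<le> n choose 2"
proof -
  have i: "initial_vs n G \<inter> {1..n} = initial_vs n G" by (auto simp: initial_vs_def)
  have t: "terminal_vs n G \<inter> {1..n} = terminal_vs n G" by (auto simp: terminal_vs_def)
  have "card G \<le> card (S n (initial_vs n G) (terminal_vs n G))"
    by (rule card_mono[OF S_finite E_sub_S[OF assms(1)]])
  moreover have "card (S n (initial_vs n G) (terminal_vs n G)) + (a choose 2) + (b choose 2) \<le> n choose 2"
    using S_bound[of a "initial_vs n G" n b "terminal_vs n G"] assms i t by simp
  ultimately show ?thesis by linarith
qed

lemma init_empty: "initial_vs n {} = {1..n}" by (auto simp: initial_vs_def)

lemma upper:
  assumes "1 \<le> y" and "y \<le> x" and "x + y < n"
    and fin: "final_graph n x y E" and td: "is_tdg n x y E"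
  shows "card E + (x choose 2) + ((y + 1) choose 2) \<le> (n choose 2) + 1"
proof -
  have r: "reachable n x y E" using fin by (simp add: final_graph_def)
  then show ?thesis
  proof (cases rule: reachable.cases)
    case start
    then show ?thesis using td assms(3) by (simp add: is_tdg_def init_empty)
  next
    case (step E0 e)
    have v0: "\<forall>e\<in>E0. valid_edge n e" using reach_valid[OF step(2)] .
    have f0: "finite E0" using valid_finite[OF v0] .
    have e0: "e \<notin> E0" using step(4) by (simp add: admissible_def)
    have cE: "card E = card E0 + 1" using step(1) f0 e0 by simp
    have px: "x \<le> card (initial_vs n E0)"
      using card_init_anti[of E0 E n] td step(1) by (auto simp: is_tdg_def)
    have qy: "y \<le> card (terminal_vs n E0)"
      using card_term_anti[of E0 E n] td step(1) by (auto simp: is_tdg_def)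
    have ne: "card (initial_vs n E0) \<noteq> x \<or> card (terminal_vs n E0) \<noteq> y"
    proof (cases "E0 = {}")
      case True then show ?thesis using assms(3) by (simp add: init_empty)
    next
      case False then show ?thesis using step(3) v0 by (auto simp: is_tdg_def)
    qed
    have cx: "Suc x choose 2 = (x choose 2) + x" using c2_pred[of "Suc x"] by simp
    have cy: "Suc y choose 2 = (y choose 2) + y" using c2_pred[of "Suc y"] by simp
    show ?thesis
    proof (cases "card (terminal_vs n E0) \<noteq> y")
      case True
      then have "y + 1 \<le> card (terminal_vs n E0)" using qy by simp
      from card_bound[OF v0 px this] assms(3) have "card E0 + (x choose 2) + ((y+1) choose 2) \<le> n choose 2"
        by simp
      then show ?thesis using cE by simp
    next
      case False
      then have "x + 1 \<le> card (initial_vs n E0)" using px ne by simp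
      from card_bound[OF v0 this qy] assms(3) have "card E0 + ((x+1) choose 2) + (y choose 2) \<le> n choose 2"
        by simp
      then show ?thesis using cE cx cy assms(2) by simp
    qed
  qed
qed


definition P :: "nat \<Rightarrow> (nat \<times> nat) set" where
  "P k = {(u,v). 1 \<le> u \<and> u < v \<and> v \<le> k}"

lemma P_finite: "finite (P k)"
  by (rule finite_subset[of _ "{1..k} \<times> {1..k}"]) (auto simp: P_def)

lemma card_P: "card (P k) = k choose 2"
proof (induction k)
  case 0
  have "P 0 = {}" by (auto simp: P_def)
  then show ?case by simp
next
  case (Suc k)
  have sp: "P (Suc k) = P k \<union> (\<lambda>u. (u, Suc k)) ` {1..k}" by (auto simp: P_def le_Suc_eq)
  have dj: "P k \<inter> (\<lambda>u. (u, Suc k)) ` {1..k} = {}" by (auto simp: P_def)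
  have "card (P (Suc k)) = card (P k) + card ((\<lambda>u. (u, Suc k)) ` {1..k})"
    unfolding sp by (rule card_Un_disjoint[OF P_finite _ dj]) simp
  also have "card ((\<lambda>u. (u, Suc k)) ` {1..k}) = k" by (simp add: card_image inj_on_def)
  finally show ?case using Suc.IH c2_pred[of "Suc k"] by simp
qed

lemma lower:
  assumes "1 \<le> y" and "y \<le> x" and "x + y < n"
  shows "\<exists>E. final_graph n x y E \<and> is_tdg n x y E \<and>
            card E + (x choose 2) + ((y + 1) choose 2) = (n choose 2) + 1"
proof -
  define E0 where "E0 = {(u,v). 1 \<le> u \<and> u < v \<and> v \<le> n \<and> u < n - y \<and> x < v}"
  define E where "E = insert (n - y, n) E0"
  have v0: "\<forall>e\<in>E0. valid_edge n e" by (auto simp: E0_def valid_edge_def)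
  have f0: "finite E0" using valid_finite[OF v0] .
  have i0: "initial_vs n E0 = {1..x}"
  proof
    show "initial_vs n E0 \<subseteq> {1..x}"
    proof
      fix v assume "v \<in> initial_vs n E0"
      then have "v \<in> {1..n}" "(1, v) \<notin> E0" by (auto simp: initial_vs_def)
      then show "v \<in> {1..x}" using assms by (auto simp: E0_def)
    qed
    show "{1..x} \<subseteq> initial_vs n E0" using assms by (auto simp: initial_vs_def E0_def)
  qed
  have t0: "terminal_vs n E0 = {n - y..n}"
  proof
    show "terminal_vs n E0 \<subseteq> {n - y..n}"
    proof
      fix u assume "u \<in> terminal_vs n E0"
      then have "u \<in> {1..n}" "(u, n) \<notin> E0" by (auto simp: terminal_vs_def)
      then show "u \<in> {n - y..n}" using assms by (auto simp: E0_def)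
    qed
    show "{n - y..n} \<subseteq> terminal_vs n E0" using assms by (auto simp: terminal_vs_def E0_def)
  qed
  have ct0: "card (terminal_vs n E0) = y + 1" using t0 assms by simp
  have sub: "finite G \<Longrightarrow> G \<subseteq> E0 \<Longrightarrow> reachable n x y G" for G
  proof (induction G rule: finite_induct)
      case empty
      show ?case by (rule reachable.start)
    next
      case (insert e F)
      have rF: "reachable n x y F" using insert by simp
      have "card (terminal_vs n E0) \<le> card (terminal_vs n F)"
        using card_term_anti[of F E0 n] insert by simp
      then have nt: "\<not> (F \<noteq> {} \<and> is_tdg n x y F)" using ct0 by (auto simp: is_tdg_def)
      have ci: "card (initial_vs n E0) \<le> card (initial_vs n (insert e F))"
        using card_init_anti[of "insert e F" E0 n] insert by simp
      have ct: "card (terminal_vs n E0) \<le> card (terminal_vs n (insert e F))"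
        using card_term_anti[of "insert e F" E0 n] insert by simp
      have "admissible n x y F e"
        using v0 insert ci ct i0 ct0 by (auto simp: admissible_def)
      then show ?case using reachable.step[OF rF nt] by simp
    qed
  have r0: "reachable n x y E0" using sub f0 by simp
  have eE0: "(n - y, n) \<notin> E0" by (auto simp: E0_def)
  have iE: "initial_vs n E = {1..x}" using i0 assms unfolding E_def initial_vs_def by auto
  have tE: "terminal_vs n E = {Suc (n - y)..n}"
  proof -
    have "terminal_vs n E = terminal_vs n E0 - {n - y}" unfolding E_def terminal_vs_def by auto
    moreover have "{n - y..n} - {n - y} = {Suc (n - y)..n}" by auto
    ultimately show ?thesis using t0 by simp
  qed
  have ctE: "card (terminal_vs n E) = y" using tE assms by simp
  have vE: "\<forall>e\<in>E. valid_edge n e" using v0 assms by (auto simp: E_def valid_edge_def)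
  have tdE: "is_tdg n x y E" using vE iE ctE by (simp add: is_tdg_def)
  have nt0: "\<not> (E0 \<noteq> {} \<and> is_tdg n x y E0)" using ct0 by (simp add: is_tdg_def)
  have adm: "admissible n x y E0 (n - y, n)"
    using vE eE0 iE ctE unfolding admissible_def E_def by auto
  have rE: "reachable n x y E" unfolding E_def by (rule reachable.step[OF r0 nt0 adm])
  have finE: "final_graph n x y E" using rE tdE by (auto simp: final_graph_def E_def)
  define H where "H = {(u,v). n - y \<le> u \<and> u < v \<and> v \<le> n}"
  have Hi: "H = (\<lambda>(u,v). (u + (n - y - 1), v + (n - y - 1))) ` P (y + 1)"
  proof
    show "H \<subseteq> (\<lambda>(u,v). (u + (n - y - 1), v + (n - y - 1))) ` P (y + 1)"
    proof
      fix p assume "p \<in> H"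
      then obtain u v where p: "p = (u,v)" "n - y \<le> u" "u < v" "v \<le> n" by (auto simp: H_def)
      then have "(u - (n - y - 1), v - (n - y - 1)) \<in> P (y + 1)" using assms by (auto simp: P_def)
      moreover have "p = (\<lambda>(u,v). (u + (n - y - 1), v + (n - y - 1))) (u - (n - y - 1), v - (n - y - 1))"
        using p assms by auto
      ultimately show "p \<in> (\<lambda>(u,v). (u + (n - y - 1), v + (n - y - 1))) ` P (y + 1)" by blast
    qed
    show "(\<lambda>(u,v). (u + (n - y - 1), v + (n - y - 1))) ` P (y + 1) \<subseteq> H"
      using assms by (auto simp: P_def H_def)
  qed
  have cH: "card H = (y + 1) choose 2"
    unfolding Hi card_P[symmetric] by (rule card_image) (auto simp: inj_on_def)
  have E0eq: "E0 = P n - (P x \<union> H)" using assms by (auto simp: E0_def P_def H_def)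
  have djH: "P x \<inter> H = {}" using assms by (auto simp: P_def H_def)
  have fH: "finite H" unfolding Hi by (rule finite_imageI[OF P_finite])
  have cU: "card (P x \<union> H) = (x choose 2) + ((y + 1) choose 2)"
    using card_Un_disjoint[OF P_finite fH djH] card_P cH by simp
  have sU: "P x \<union> H \<subseteq> P n" using assms by (auto simp: P_def H_def)
  have "card E0 = card (P n) - card (P x \<union> H)"
    unfolding E0eq by (rule card_Diff_subset[OF finite_subset[OF sU P_finite] sU])
  moreover have "card (P x \<union> H) \<le> card (P n)" by (rule card_mono[OF P_finite sU])
  ultimately have "card E0 + (x choose 2) + ((y + 1) choose 2) = n choose 2"
    using cU card_P by simp
  moreover have "card E = card E0 + 1" using f0 eE0 by (simp add: E_def)
  ultimately show ?thesis using finE tdE by auto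
qed

theorem mainTheorem13:
  fixes x y n :: nat
  assumes "1 \<le> y" and "y \<le> x" and "x + y < n"
  shows "(\<exists>E. final_graph n x y E \<and> is_tdg n x y E \<and>
            int (card E) = int (n choose 2) + 1 - int (x choose 2) - int ((y + 1) choose 2))
       \<and> (\<forall>E. final_graph n x y E \<and> is_tdg n x y E \<longrightarrow>
            int (card E) \<le> int (n choose 2) + 1 - int (x choose 2) - int ((y + 1) choose 2))"
proof
  obtain E where f: "final_graph n x y E" "is_tdg n x y E" and
    eq: "card E + (x choose 2) + ((y + 1) choose 2) = (n choose 2) + 1"
    using lower[OF assms] by blast
  have h: "int (card E + (x choose 2) + ((y+1) choose 2)) = int ((n choose 2) + 1)" using eq by simp
  have "int (card E) = int (n choose 2) + 1 - int (x choose 2) - int ((y + 1) choose 2)"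
    using h by simp
  then show "\<exists>E. final_graph n x y E \<and> is_tdg n x y E \<and>
            int (card E) = int (n choose 2) + 1 - int (x choose 2) - int ((y + 1) choose 2)"
    using f by blast
next
  show "\<forall>E. final_graph n x y E \<and> is_tdg n x y E \<longrightarrow>
            int (card E) \<le> int (n choose 2) + 1 - int (x choose 2) - int ((y + 1) choose 2)"
  proof (intro allI impI)
    fix E assume "final_graph n x y E \<and> is_tdg n x y E"
    then have "card E + (x choose 2) + ((y + 1) choose 2) \<le> (n choose 2) + 1"
      using upper[OF assms] by blast
    then show "int (card E) \<le> int (n choose 2) + 1 - int (x choose 2) - int ((y + 1) choose 2)"
      by linarith
  qed
qed

end
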